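(* Let $\mathcal{D}(\cdot)$ be a location-scale family on a convex set $\Theta\subseteq\mathbb{R}^d$, $z_\theta\sim\mathcal{D}(\theta)\iff z_\theta\overset{d}{=}(\Sigma_0+\Sigma(\theta))z_0+\mu_0+\mu\theta$, let $g:\mathbb{R}^m\to\mathbb{R}$, and let $\gamma_z\geq 0$. Suppose that for all $\theta,\theta'\in\Theta$ and $\alpha\in(0,1)$, $$\mathbb{E}_{z\sim\mathcal{D}(\alpha\theta+(1-\alpha)\theta')}[g(z)]\leq\mathbb{E}_{z\sim\alpha\mathcal{D}(\theta)+(1-\alpha)\mathcal{D}(\theta')}[g(z)]-\frac{\alpha(1-\alpha)\gamma_z}{2}\mathbb{E}\|\Sigma(\theta-\theta')z_0+\mu(\theta-\theta')\|_2^2.$$ Then for all $\theta,\theta'\in\Theta$ such that $\theta\mapsto\mathbb{E}_{z\sim\mathcal{D}(\theta)}[g(z)]$ is differentiable at $\theta$, $$\mathbb{E}_{z\sim\mathcal{D}(\theta')}[g(z)]\geq\mathbb{E}_{z\sim\mathcal{D}(\theta)}[g(z)]+\big(\nabla_\theta\mathbb{E}_{z\sim\mathcal{D}(\theta)}[g(z)]\big)^\top(\theta'-\theta)+\frac{\gamma_z}{2}\mathbb{E}\|\Sigma(\theta-\theta')z_0+\mu(\theta-\theta')\|_2^2.$$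
   Context: Location-scale family: $z_0\sim\mathcal{D}_0$ is drawn from a fixed zero-mean distribution $\mathcal{D}_0$ on $\mathbb{R}^m$ with finite second moments, $\Sigma_0\in\mathbb{R}^{m\times m}$, $\mu_0\in\mathbb{R}^m$ fixed, $\mu:\mathbb{R}^d\to\mathbb{R}^m$ and $\Sigma:\mathbb{R}^d\to\mathbb{R}^{m\times m}$ linear maps; expectations $\mathbb{E}\|\cdot\|$ are over $z_0\sim\mathcal{D}_0$, and all expectations of $g$ are assumed finite. $\alpha\mathcal{D}(\theta)+(1-\alpha)\mathcal{D}(\theta')$ denotes the mixture distribution. *)

theory Defs
  imports "HOL-Probability.Probability"
begin

definition ls_map ::
  "real^'m^'m \<Rightarrow> (real^'d::finite \<Rightarrow> real^'m^'m) \<Rightarrow> real^'m \<Rightarrow> (real^'d \<Rightarrow> real^'m) \<Rightarrow> real^'d \<Rightarrow> real^'m \<Rightarrow> real^'m::finite"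
  where "ls_map S0 SS mu0 mu \<theta> z0 = (S0 + SS \<theta>) *v z0 + mu0 + mu \<theta>"

definition ls_dist ::
  "(real^'m) measure \<Rightarrow> real^'m^'m \<Rightarrow> (real^'d::finite \<Rightarrow> real^'m^'m) \<Rightarrow> real^'m \<Rightarrow> (real^'d \<Rightarrow> real^'m) \<Rightarrow> real^'d \<Rightarrow> (real^'m::finite) measure"
  where "ls_dist D0 S0 SS mu0 mu \<theta> = distr D0 borel (ls_map S0 SS mu0 mu \<theta>)"

definition mix_measure :: "real \<Rightarrow> 'a measure \<Rightarrow> 'a measure \<Rightarrow> 'a measure"
  where "mix_measure \<alpha> M N = measure_of (space M) (sets M)
           (\<lambda>A. ennreal \<alpha> * emeasure M A + ennreal (1 - \<alpha>) * emeasure N A)"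

end

theory Submission imports Defs begin

lemma mix_sets: "sets (mix_measure \<alpha> M N) = sets M"
  unfolding mix_measure_def by (simp add: sets.space_closed)

lemma mix_space: "space (mix_measure \<alpha> M N) = space M"
  unfolding mix_measure_def by (simp add: sets.space_closed)

lemma mix_meas: "f \<in> measurable M K \<Longrightarrow> f \<in> measurable (mix_measure \<alpha> M N) K"
  by (subst measurable_cong_sets[OF mix_sets refl])

lemma meas_sN: "sets N = sets M \<Longrightarrow> f \<in> measurable M K \<Longrightarrow> f \<in> measurable N K"
  by (subst measurable_cong_sets[of N M, OF _ refl])

lemma mix_emeasure:
  assumes "sets N = sets M" "A \<in> sets M"
  shows "emeasure (mix_measure \<alpha> M N) A = ennreal \<alpha> * emeasure M A + ennreal (1 - \<alpha>) * emeasure N A"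
  unfolding mix_measure_def
proof (rule emeasure_measure_of_sigma)
  show "sigma_algebra (space M) (sets M)" by (rule sets.sigma_algebra_axioms)
  show "positive (sets M) (\<lambda>A. ennreal \<alpha> * emeasure M A + ennreal (1 - \<alpha>) * emeasure N A)"
    by (simp add: positive_def)
  show "countably_additive (sets M) (\<lambda>A. ennreal \<alpha> * emeasure M A + ennreal (1 - \<alpha>) * emeasure N A)"
  proof (rule countably_additiveI)
    fix A :: "nat \<Rightarrow> _" assume h: "range A \<subseteq> sets M" "disjoint_family A" "\<Union> (range A) \<in> sets M"
    have hN: "range A \<subseteq> sets N" "\<Union> (range A) \<in> sets N" using h assms by auto
    have m: "(\<Sum>i. emeasure M (A i)) = emeasure M (\<Union> (range A))"
      using h by (intro suminf_emeasure) auto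
    have n: "(\<Sum>i. emeasure N (A i)) = emeasure N (\<Union> (range A))"
      using hN h by (intro suminf_emeasure) auto
    show "(\<Sum>i. ennreal \<alpha> * emeasure M (A i) + ennreal (1 - \<alpha>) * emeasure N (A i)) =
          ennreal \<alpha> * emeasure M (\<Union> (range A)) + ennreal (1 - \<alpha>) * emeasure N (\<Union> (range A))"
      by (simp add: suminf_add[symmetric] ennreal_suminf_cmult m[symmetric] n[symmetric])
  qed
  show "A \<in> sets M" by fact
qed

lemma mix_nn_integral:
  assumes sN: "sets N = sets M" and f: "f \<in> borel_measurable M"
  shows "(\<integral>\<^sup>+x. f x \<partial>mix_measure \<alpha> M N) = ennreal \<alpha> * (\<integral>\<^sup>+x. f x \<partial>M) + ennreal (1 - \<alpha>) * (\<integral>\<^sup>+x. f x \<partial>N)"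
  using f
proof (induct rule: borel_measurable_induct)
  case (cong f g)
  have "f \<in> borel_measurable (mix_measure \<alpha> M N)" "g \<in> borel_measurable (mix_measure \<alpha> M N)"
    using cong(1,2) by (auto intro: mix_meas)
  have "(\<integral>\<^sup>+x. f x \<partial>mix_measure \<alpha> M N) = (\<integral>\<^sup>+x. g x \<partial>mix_measure \<alpha> M N)"
    by (intro nn_integral_cong) (simp add: mix_space cong(3))
  moreover have "(\<integral>\<^sup>+x. f x \<partial>M) = (\<integral>\<^sup>+x. g x \<partial>M)"
    by (intro nn_integral_cong) (simp add: cong(3))
  moreover have "(\<integral>\<^sup>+x. f x \<partial>N) = (\<integral>\<^sup>+x. g x \<partial>N)"
    using sets_eq_imp_space_eq[OF sN] by (intro nn_integral_cong) (simp add: cong(3))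
  ultimately show ?case using cong(4) by simp
next
  case (set A)
  have a1: "A \<in> sets (mix_measure \<alpha> M N)" "A \<in> sets N" using set sN by (auto simp: mix_sets)
  show ?case
    unfolding nn_integral_indicator[OF a1(1)] nn_integral_indicator[OF a1(2)] nn_integral_indicator[OF set]
    by (rule mix_emeasure[OF sN set])
next
  case (mult u c)
  have m: "u \<in> borel_measurable (mix_measure \<alpha> M N)" "u \<in> borel_measurable N"
    using mult(2) sN by (auto intro: mix_meas meas_sN)
  have "(\<integral>\<^sup>+x. c * u x \<partial>mix_measure \<alpha> M N) = c * (\<integral>\<^sup>+x. u x \<partial>mix_measure \<alpha> M N)"
    by (rule nn_integral_cmult[OF m(1)])
  also have "\<dots> = c * (ennreal \<alpha> * (\<integral>\<^sup>+x. u x \<partial>M) + ennreal (1 - \<alpha>) * (\<integral>\<^sup>+x. u x \<partial>N))"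
    using mult(4) by (simp only:)
  also have "\<dots> = ennreal \<alpha> * (c * (\<integral>\<^sup>+x. u x \<partial>M)) + ennreal (1 - \<alpha>) * (c * (\<integral>\<^sup>+x. u x \<partial>N))"
    by (simp only: distrib_left mult.left_commute)
  also have "\<dots> = ennreal \<alpha> * (\<integral>\<^sup>+x. c * u x \<partial>M) + ennreal (1 - \<alpha>) * (\<integral>\<^sup>+x. c * u x \<partial>N)"
    using nn_integral_cmult[OF mult(2), of c] nn_integral_cmult[OF m(2), of c] by (simp only:)
  finally show ?case .
next
  case (add u v)
  have m: "u \<in> borel_measurable (mix_measure \<alpha> M N)" "u \<in> borel_measurable N"
       "v \<in> borel_measurable (mix_measure \<alpha> M N)" "v \<in> borel_measurable N"
    using add(1,4) sN by (auto intro: mix_meas meas_sN)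
  have "(\<integral>\<^sup>+x. v x + u x \<partial>mix_measure \<alpha> M N) = (\<integral>\<^sup>+x. v x \<partial>mix_measure \<alpha> M N) + (\<integral>\<^sup>+x. u x \<partial>mix_measure \<alpha> M N)"
    by (rule nn_integral_add[OF m(3) m(1)])
  also have "\<dots> = (ennreal \<alpha> * (\<integral>\<^sup>+x. v x \<partial>M) + ennreal (1 - \<alpha>) * (\<integral>\<^sup>+x. v x \<partial>N))
       + (ennreal \<alpha> * (\<integral>\<^sup>+x. u x \<partial>M) + ennreal (1 - \<alpha>) * (\<integral>\<^sup>+x. u x \<partial>N))"
    using add(3) add(7) by (simp only:)
  also have "\<dots> = ennreal \<alpha> * ((\<integral>\<^sup>+x. v x \<partial>M) + (\<integral>\<^sup>+x. u x \<partial>M)) + ennreal (1 - \<alpha>) * ((\<integral>\<^sup>+x. v x \<partial>N) + (\<integral>\<^sup>+x. u x \<partial>N))"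
    by (simp only: distrib_left add.assoc add.left_commute)
  also have "\<dots> = ennreal \<alpha> * (\<integral>\<^sup>+x. v x + u x \<partial>M) + ennreal (1 - \<alpha>) * (\<integral>\<^sup>+x. v x + u x \<partial>N)"
    using nn_integral_add[OF add(4) add(1)] nn_integral_add[OF m(4) m(2)] by (simp only:)
  finally show ?case .
next
  case (seq U)
  have m1: "\<And>i. U i \<in> borel_measurable (mix_measure \<alpha> M N)" "\<And>i. U i \<in> borel_measurable N"
    using seq(1) sN by (auto intro: mix_meas meas_sN)
  have s1: "(\<integral>\<^sup>+x. (SUP i. U i) x \<partial>K) = (SUP i. \<integral>\<^sup>+x. U i x \<partial>K)"
    if "\<And>i. U i \<in> borel_measurable K" for K
    unfolding SUP_apply by (rule nn_integral_monotone_convergence_SUP[OF seq(4) that])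
  have i1: "incseq (\<lambda>i. \<integral>\<^sup>+x. U i x \<partial>M)" "incseq (\<lambda>i. \<integral>\<^sup>+x. U i x \<partial>N)"
    using seq(4) by (auto simp: incseq_def le_fun_def intro!: nn_integral_mono)
  have i2: "incseq (\<lambda>i. ennreal \<alpha> * (\<integral>\<^sup>+x. U i x \<partial>M))" "incseq (\<lambda>i. ennreal (1-\<alpha>) * (\<integral>\<^sup>+x. U i x \<partial>N))"
    using i1 unfolding incseq_def by (auto intro: mult_left_mono)
  have "(\<integral>\<^sup>+x. (SUP i. U i) x \<partial>mix_measure \<alpha> M N) = (SUP i. \<integral>\<^sup>+x. U i x \<partial>mix_measure \<alpha> M N)"
    by (rule s1[OF m1(1)])
  also have "\<dots> = (SUP i. ennreal \<alpha> * (\<integral>\<^sup>+x. U i x \<partial>M) + ennreal (1 - \<alpha>) * (\<integral>\<^sup>+x. U i x \<partial>N))"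
    using seq(3) by presburger
  also have "\<dots> = (SUP i. ennreal \<alpha> * (\<integral>\<^sup>+x. U i x \<partial>M)) + (SUP i. ennreal (1 - \<alpha>) * (\<integral>\<^sup>+x. U i x \<partial>N))"
    by (rule ennreal_SUP_add[OF i2])
  also have "\<dots> = ennreal \<alpha> * (SUP i. \<integral>\<^sup>+x. U i x \<partial>M) + ennreal (1 - \<alpha>) * (SUP i. \<integral>\<^sup>+x. U i x \<partial>N)"
    by (simp only: SUP_mult_left_ennreal)
  also have "\<dots> = ennreal \<alpha> * (\<integral>\<^sup>+x. (SUP i. U i) x \<partial>M) + ennreal (1 - \<alpha>) * (\<integral>\<^sup>+x. (SUP i. U i) x \<partial>N)"
    using s1[OF seq(1)] s1[OF m1(2)] by (simp only:)
  finally show ?case .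
qed


lemma mix_integral:
  fixes f :: "'a \<Rightarrow> real"
  assumes sN: "sets N = sets M" and fM: "integrable M f" and fN: "integrable N f"
    and a0: "0 \<le> \<alpha>" and a1: "\<alpha> \<le> 1"
  shows "integral\<^sup>L (mix_measure \<alpha> M N) f = \<alpha> * integral\<^sup>L M f + (1 - \<alpha>) * integral\<^sup>L N f"
proof -
  have mM: "f \<in> borel_measurable M" using fM by auto
  have mN: "f \<in> borel_measurable N" using fN by auto
  have mX: "f \<in> borel_measurable (mix_measure \<alpha> M N)" using mM by (rule mix_meas)
  have mM': "(\<lambda>x. ennreal (f x)) \<in> borel_measurable M" "(\<lambda>x. ennreal (- f x)) \<in> borel_measurable M"
    using mM by auto
  have fin: "(\<integral>\<^sup>+ x. ennreal (f x) \<partial>M) \<noteq> \<infinity>" "(\<integral>\<^sup>+ x. ennreal (- f x) \<partial>M) \<noteq> \<infinity>"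
     "(\<integral>\<^sup>+ x. ennreal (f x) \<partial>N) \<noteq> \<infinity>" "(\<integral>\<^sup>+ x. ennreal (- f x) \<partial>N) \<noteq> \<infinity>"
    using fM fN unfolding real_integrable_def by auto
  have e1: "(\<integral>\<^sup>+ x. ennreal (f x) \<partial>mix_measure \<alpha> M N) = ennreal \<alpha> * (\<integral>\<^sup>+ x. ennreal (f x) \<partial>M) + ennreal (1 - \<alpha>) * (\<integral>\<^sup>+ x. ennreal (f x) \<partial>N)"
    by (rule mix_nn_integral[OF sN mM'(1)])
  have e2: "(\<integral>\<^sup>+ x. ennreal (- f x) \<partial>mix_measure \<alpha> M N) = ennreal \<alpha> * (\<integral>\<^sup>+ x. ennreal (- f x) \<partial>M) + ennreal (1 - \<alpha>) * (\<integral>\<^sup>+ x. ennreal (- f x) \<partial>N)"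
    by (rule mix_nn_integral[OF sN mM'(2)])
  have key: "enn2real (ennreal \<alpha> * a + ennreal (1 - \<alpha>) * b) = \<alpha> * enn2real a + (1 - \<alpha>) * enn2real b"
    if "a \<noteq> \<infinity>" "b \<noteq> \<infinity>" for a b :: ennreal
  proof -
    have t1: "ennreal \<alpha> * a < top" "ennreal (1 - \<alpha>) * b < top"
      using that by (simp_all add: ennreal_mult_less_top less_top)
    have "enn2real (ennreal \<alpha> * a + ennreal (1 - \<alpha>) * b) = enn2real (ennreal \<alpha> * a) + enn2real (ennreal (1 - \<alpha>) * b)"
      by (rule enn2real_plus[OF t1])
    also have "\<dots> = \<alpha> * enn2real a + (1 - \<alpha>) * enn2real b"
      using a0 a1 by (simp add: enn2real_mult)
    finally show ?thesis .
  qed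
  have iX: "integrable (mix_measure \<alpha> M N) f"
    unfolding real_integrable_def using mX e1 e2 fin by (simp add: ennreal_mult_eq_top_iff)
  show ?thesis
    unfolding real_lebesgue_integral_def[OF iX] real_lebesgue_integral_def[OF fM] real_lebesgue_integral_def[OF fN]
      e1 e2 key[OF fin(1) fin(3)] key[OF fin(2) fin(4)]
    by (simp add: algebra_simps)
qed

theorem lemmaC1:
  fixes D0 :: "(real^'m::finite) measure"
    and S0 :: "real^'m^'m" and mu0 :: "real^'m"
    and SS :: "real^'d::finite \<Rightarrow> real^'m^'m" and mu :: "real^'d \<Rightarrow> real^'m"
    and \<Theta> :: "(real^'d) set" and g :: "real^'m \<Rightarrow> real" and \<gamma> :: real
  assumes D0_prob: "prob_space D0" and D0_sets: "sets D0 = sets borel"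
    and D0_second: "integrable D0 (\<lambda>z. norm z ^ 2)"
    and D0_mean: "integral\<^sup>L D0 (\<lambda>z. z) = 0"
    and lin_Sigma: "linear SS" and lin_mu: "linear mu"
    and conv: "convex \<Theta>"
    and g_int: "\<And>\<theta>. integrable (ls_dist D0 S0 SS mu0 mu \<theta>) g"
    and \<gamma>_nonneg: "\<gamma> \<ge> 0"
    and hyp: "\<And>\<theta> \<theta>' \<alpha>. \<theta> \<in> \<Theta> \<Longrightarrow> \<theta>' \<in> \<Theta> \<Longrightarrow> 0 < \<alpha> \<Longrightarrow> \<alpha> < 1 \<Longrightarrow>
        integral\<^sup>L (ls_dist D0 S0 SS mu0 mu (\<alpha> *\<^sub>R \<theta> + (1 - \<alpha>) *\<^sub>R \<theta>')) g
          \<le> integral\<^sup>L (mix_measure \<alpha> (ls_dist D0 S0 SS mu0 mu \<theta>) (ls_dist D0 S0 SS mu0 mu \<theta>')) g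
            - \<alpha> * (1 - \<alpha>) * \<gamma> / 2 *
              integral\<^sup>L D0 (\<lambda>z0. (norm (SS (\<theta> - \<theta>') *v z0 + mu (\<theta> - \<theta>'))) ^ 2)"
    and \<theta>_in: "\<theta> \<in> \<Theta>" and \<theta>'_in: "\<theta>' \<in> \<Theta>"
    and diff: "(\<lambda>t. integral\<^sup>L (ls_dist D0 S0 SS mu0 mu t) g) differentiable (at \<theta>)"
  shows "integral\<^sup>L (ls_dist D0 S0 SS mu0 mu \<theta>') g
     \<ge> integral\<^sup>L (ls_dist D0 S0 SS mu0 mu \<theta>) g
       + frechet_derivative (\<lambda>t. integral\<^sup>L (ls_dist D0 S0 SS mu0 mu t) g) (at \<theta>) (\<theta>' - \<theta>)
       + \<gamma> / 2 * integral\<^sup>L D0 (\<lambda>z0. (norm (SS (\<theta> - \<theta>') *v z0 + mu (\<theta> - \<theta>'))) ^ 2)"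
  proof -
  define F where "F = (\<lambda>t. integral\<^sup>L (ls_dist D0 S0 SS mu0 mu t) g)"
  define Q where "Q = integral\<^sup>L D0 (\<lambda>z0. (norm (SS (\<theta> - \<theta>') *v z0 + mu (\<theta> - \<theta>'))) ^ 2)"
  define h where "h = \<theta>' - \<theta>"
  define D where "D = frechet_derivative F (at \<theta>)"
  have Qsym: "integral\<^sup>L D0 (\<lambda>z0. (norm (SS (\<theta>' - \<theta>) *v z0 + mu (\<theta>' - \<theta>))) ^ 2) = Q"
  proof -
    have "norm (SS (\<theta>' - \<theta>) *v z0 + mu (\<theta>' - \<theta>)) = norm (SS (\<theta> - \<theta>') *v z0 + mu (\<theta> - \<theta>'))" for z0
    proof -
      have "SS (\<theta>' - \<theta>) *v z0 + mu (\<theta>' - \<theta>) = - (SS (\<theta> - \<theta>') *v z0 + mu (\<theta> - \<theta>'))"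
        by (simp add: linear_diff[OF lin_Sigma] linear_diff[OF lin_mu] matrix_vector_mult_diff_rdistrib)
      then show ?thesis by (metis norm_minus_cancel)
    qed
    then show ?thesis unfolding Q_def by simp
  qed
  have sets_L: "\<And>t. sets (ls_dist D0 S0 SS mu0 mu t) = sets borel"
    by (simp add: ls_dist_def)
  have ineq: "(F (\<theta> + t *\<^sub>R h) - F \<theta>) / t \<le> F \<theta>' - F \<theta> - (1 - t) * \<gamma> / 2 * Q"
    if t: "0 < t" "t < 1" for t
  proof -
    have pt: "t *\<^sub>R \<theta>' + (1 - t) *\<^sub>R \<theta> = \<theta> + t *\<^sub>R h"
      unfolding h_def by (simp add: algebra_simps)
    have mixeq: "integral\<^sup>L (mix_measure t (ls_dist D0 S0 SS mu0 mu \<theta>') (ls_dist D0 S0 SS mu0 mu \<theta>)) g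
        = t * F \<theta>' + (1 - t) * F \<theta>"
      unfolding F_def using t by (intro mix_integral g_int) (auto simp: sets_L)
    have "F (\<theta> + t *\<^sub>R h) \<le> t * F \<theta>' + (1 - t) * F \<theta> - t * (1 - t) * \<gamma> / 2 * Q"
      using hyp[OF \<theta>'_in \<theta>_in t] unfolding pt mixeq Qsym by (simp add: F_def)
    then have "F (\<theta> + t *\<^sub>R h) - F \<theta> \<le> t * (F \<theta>' - F \<theta> - (1 - t) * \<gamma> / 2 * Q)"
      by (simp add: algebra_simps)
    then show ?thesis using t by (simp add: divide_le_eq mult.commute)
  qed
  have Fd: "(F has_derivative D) (at \<theta>)"
    using diff unfolding D_def F_def by (simp add: frechet_derivative_works)
  have lD: "linear D" using Fd by (rule has_derivative_linear)
  have pd: "((\<lambda>t::real. \<theta> + t *\<^sub>R h) has_derivative (\<lambda>t. t *\<^sub>R h)) (at 0)"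
    by (auto intro!: derivative_eq_intros)
  have "((F \<circ> (\<lambda>t::real. \<theta> + t *\<^sub>R h)) has_derivative (D \<circ> (\<lambda>t. t *\<^sub>R h))) (at 0)"
    by (rule diff_chain_at[OF pd]) (simp add: Fd)
  moreover have "D \<circ> (\<lambda>t. t *\<^sub>R h) = (\<lambda>t. D h * t)"
    using lD by (auto simp: linear_scale linear_cmul)
  ultimately have "((\<lambda>t. F (\<theta> + t *\<^sub>R h)) has_derivative (\<lambda>t. D h * t)) (at 0)"
    by (simp add: comp_def)
  then have "((\<lambda>t. F (\<theta> + t *\<^sub>R h)) has_field_derivative D h) (at 0)"
    by (simp add: has_field_derivative_def)
  then have "((\<lambda>t. (F (\<theta> + t *\<^sub>R h) - F \<theta>) / t) \<longlongrightarrow> D h) (at 0)"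
    unfolding has_field_derivative_iff by simp
  then have lim1: "((\<lambda>t. (F (\<theta> + t *\<^sub>R h) - F \<theta>) / t) \<longlongrightarrow> D h) (at_right 0)"
    by (rule tendsto_mono[OF at_le, rotated]) simp
  have lim2: "((\<lambda>t. F \<theta>' - F \<theta> - (1 - t) * \<gamma> / 2 * Q) \<longlongrightarrow> F \<theta>' - F \<theta> - (1 - 0) * \<gamma> / 2 * Q) (at_right 0)"
    by (intro tendsto_intros) simp
  have ev: "eventually (\<lambda>t. (F (\<theta> + t *\<^sub>R h) - F \<theta>) / t \<le> F \<theta>' - F \<theta> - (1 - t) * \<gamma> / 2 * Q) (at_right (0::real))"
    unfolding eventually_at_right_field using ineq by (intro exI[of _ 1]) simp
  have "D h \<le> F \<theta>' - F \<theta> - (1 - 0) * \<gamma> / 2 * Q"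
    by (rule tendsto_le[OF _ lim2 lim1 ev]) simp
  then show ?thesis unfolding F_def[symmetric] Q_def[symmetric] D_def[symmetric] h_def[symmetric] by (simp add: F_def)
qed

end
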